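(* Let $\tau\in(0,1]$. In a finite-horizon MDP with wealth levels as described in the context, the optimal lower $\tau$-quantile $\underline{q}^*=\max_\pi \underline{q}^\pi_\tau$ (maximum over all policies at horizon $T$, with respect to $\prec_{\mathcal W}$) satisfies $$\underline{q}^* = \min\{w\in\mathcal W_T : F^*(w)\ge \tau\},\qquad\text{where } F^*(w)=\min_\pi F^\pi(w)\ \text{ for all } w,$$ the minimum over $w$ being with respect to $\preceq_{\mathcal W}$ and the minimum over $\pi$ being over all policies at horizon $T$.
   Context: An MDP is a tuple $(\mathcal S,\mathcal A,\mathcal P,r,s_0)$ with finite state set $\mathcal S$, finite action set $\mathcal A$, transition probabilities $\mathcal P(s,a,s')$, reward function $r:\mathcal S\times\mathcal A\to\mathcal R$ (values in some set $\mathcal R$), initial state $s_0$, and finite horizon $T$. A $t$-history is $h_t=(s_0,a_0,s_1,\dots,a_{t-1},s_t)$; a policy is a sequence of $T$ decision rules (possibly history-dependent and randomized) selecting actions. The wealth of a history is defined by $w(h_0)=w_0$ and $w(h_t)=w(h_{t-1})\circ r(s_{t-1},a_{t-1})$, where $\circ:\mathcal W\times\mathcal R\to\mathcal W$ is a binary operation on a wealth space $\mathcal W$ with left identity $w_0$. Let $\mathcal W_T$ be the set of wealth levels of $T$-histories; it is totally ordered by $\preceq_{\mathcal W}$ (strict part $\prec_{\mathcal W}$), has a least element $w_{\min}$ and a greatest element $w_{\max}$, and carries a distance $d$ consistent with the order. For a policy $\pi$, $p^\pi(w)$ is the probability that the $T$-history generated by $\pi$ from $s_0$ has wealth $w\in\mathcal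 W_T$; $F^\pi(w)=\sum_{w'\preceq_{\mathcal W} w}p^\pi(w')$. The lower $\tau$-quantile of $\pi$ is $\underline{q}^\pi_\tau=\min\{w\in\mathcal W_T: F^\pi(w)\ge\tau\}$ (minimum w.r.t. $\prec_{\mathcal W}$). *)

theory Defs
  imports "HOL-Probability.Probability_Mass_Function"
begin

text \<open>A t-history h_t = (s0,a0,s1,...,a_{t-1},s_t) is represented, for the fixed initial
state s0, by the list [(a0,s1),...,(a_{t-1},s_t)] of length t.\<close>

type_synonym ('s,'a) hist = "('a \<times> 's) list"
type_synonym ('s,'a) policy = "('s,'a) hist \<Rightarrow> 'a pmf"

definition last_state :: "'s \<Rightarrow> ('s,'a) hist \<Rightarrow> 's" where
  "last_state s0 h = (if h = [] then s0 else snd (last h))"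

definition hist_prob ::
  "('s \<Rightarrow> 'a \<Rightarrow> 's pmf) \<Rightarrow> 's \<Rightarrow> ('s,'a) policy \<Rightarrow> ('s,'a) hist \<Rightarrow> real" where
  "hist_prob P s0 pol h =
     (\<Prod>i<length h. pmf (pol (take i h)) (fst (h ! i))
                    * pmf (P (last_state s0 (take i h)) (fst (h ! i))) (snd (h ! i)))"

text \<open>Wealth of a history: w(h_0) = w0, w(h_t) = w(h_{t-1}) o r(s_{t-1}, a_{t-1}).\<close>
definition wealth ::
  "('w \<Rightarrow> 'r \<Rightarrow> 'w) \<Rightarrow> 'w \<Rightarrow> ('s \<Rightarrow> 'a \<Rightarrow> 'r) \<Rightarrow> 's \<Rightarrow> ('s,'a) hist \<Rightarrow> 'w" where
  "wealth op w0 r s0 h =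
     fst (foldl (\<lambda>(w, s) (a, s'). (op w (r s a), s')) (w0, s0) h)"

definition wealth_levels ::
  "('w \<Rightarrow> 'r \<Rightarrow> 'w) \<Rightarrow> 'w \<Rightarrow> ('s \<Rightarrow> 'a \<Rightarrow> 'r) \<Rightarrow> 's \<Rightarrow> nat \<Rightarrow> 'w set" where
  "wealth_levels op w0 r s0 T = wealth op w0 r s0 ` {h. length h = T}"

definition wealth_pmf ::
  "('s \<Rightarrow> 'a \<Rightarrow> 's pmf) \<Rightarrow> ('w \<Rightarrow> 'r \<Rightarrow> 'w) \<Rightarrow> 'w \<Rightarrow> ('s \<Rightarrow> 'a \<Rightarrow> 'r) \<Rightarrow> 's \<Rightarrow> nat
     \<Rightarrow> ('s,'a) policy \<Rightarrow> 'w \<Rightarrow> real" where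
  "wealth_pmf P op w0 r s0 T pol w =
     (\<Sum>h\<in>{h. length h = T \<and> wealth op w0 r s0 h = w}. hist_prob P s0 pol h)"

definition wealth_cdf ::
  "('w \<Rightarrow> 'w \<Rightarrow> bool) \<Rightarrow> ('s \<Rightarrow> 'a \<Rightarrow> 's pmf) \<Rightarrow> ('w \<Rightarrow> 'r \<Rightarrow> 'w) \<Rightarrow> 'w
     \<Rightarrow> ('s \<Rightarrow> 'a \<Rightarrow> 'r) \<Rightarrow> 's \<Rightarrow> nat \<Rightarrow> ('s,'a) policy \<Rightarrow> 'w \<Rightarrow> real" where
  "wealth_cdf le P op w0 r s0 T pol w =
     (\<Sum>w'\<in>{w'\<in>wealth_levels op w0 r s0 T. le w' w}. wealth_pmf P op w0 r s0 T pol w')"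

definition is_min_wrt :: "('w \<Rightarrow> 'w \<Rightarrow> bool) \<Rightarrow> 'w set \<Rightarrow> 'w \<Rightarrow> bool" where
  "is_min_wrt le A x \<longleftrightarrow> x \<in> A \<and> (\<forall>y\<in>A. le x y)"

definition is_max_wrt :: "('w \<Rightarrow> 'w \<Rightarrow> bool) \<Rightarrow> 'w set \<Rightarrow> 'w \<Rightarrow> bool" where
  "is_max_wrt le A x \<longleftrightarrow> x \<in> A \<and> (\<forall>y\<in>A. le y x)"

definition lower_quantile ::
  "('w \<Rightarrow> 'w \<Rightarrow> bool) \<Rightarrow> ('s \<Rightarrow> 'a \<Rightarrow> 's pmf) \<Rightarrow> ('w \<Rightarrow> 'r \<Rightarrow> 'w) \<Rightarrow> 'w
     \<Rightarrow> ('s \<Rightarrow> 'a \<Rightarrow> 'r) \<Rightarrow> 's \<Rightarrow> nat \<Rightarrow> real \<Rightarrow> ('s,'a) policy \<Rightarrow> 'w" where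
  "lower_quantile le P op w0 r s0 T tau pol =
     (THE q. is_min_wrt le {w\<in>wealth_levels op w0 r s0 T. tau \<le> wealth_cdf le P op w0 r s0 T pol w} q)"

end

theory Submission
  imports Defs
begin


lemma fin_len: "finite {h::('x::finite) list. length h = n \<and> Q h}"
proof -
  have "finite {xs::'x list. set xs \<subseteq> UNIV \<and> length xs = n}"
    by (rule finite_lists_length_eq) simp
  then show ?thesis by (rule finite_subset[rotated]) auto
qed

lemma sum_len_Suc:
  "sum g {h::('x::finite) list. length h = Suc n \<and> Q h}
   = (\<Sum>x\<in>UNIV. sum (\<lambda>h. g (x#h)) {h. length h = n \<and> Q (x#h)})"
proof -
  have eq: "{h::'x list. length h = Suc n \<and> Q h}
      = (\<lambda>(x,h). x#h) ` (SIGMA x:UNIV. {h. length h = n \<and> Q (x#h)})"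
    by (auto simp: length_Suc_conv image_iff)
  have inj: "inj_on (\<lambda>(x,h). x#h) (SIGMA x:(UNIV::'x set). {h. length h = n \<and> Q (x#h)})"
    by (auto simp: inj_on_def)
  show ?thesis
    unfolding eq sum.reindex[OF inj]
    by (subst sum.Sigma) (auto simp: fin_len split_def)
qed

lemma last_state_cons:
  "last_state s0 ((a,s)#xs) = last_state s xs"
  by (auto simp: last_state_def)

lemma hp_cons:
  "hist_prob P s0 pol ((a,s)#h) = pmf (pol []) a * pmf (P s0 a) s
     * hist_prob P s (\<lambda>h'. pol ((a,s)#h')) h"
proof -
  have "(\<Prod>i<length h. pmf (pol (take (Suc i) ((a,s)#h))) (fst (((a,s)#h) ! Suc i))
        * pmf (P (last_state s0 (take (Suc i) ((a,s)#h))) (fst (((a,s)#h) ! Suc i))) (snd (((a,s)#h) ! Suc i)))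
     = (\<Prod>i<length h. pmf (pol ((a,s)#take i h)) (fst (h ! i))
        * pmf (P (last_state s (take i h)) (fst (h ! i))) (snd (h ! i)))"
    by (rule prod.cong) (simp_all add: last_state_cons del: take_Suc)
  then show ?thesis
    unfolding hist_prob_def
    by (simp only: length_Cons prod.lessThan_Suc_shift) (simp add: last_state_def mult.assoc)
qed

lemma hp_nonneg: "0 \<le> hist_prob P s pol h"
  unfolding hist_prob_def by (auto intro!: prod_nonneg)

definition ff where
  "ff P n s pol Q = (\<Sum>h\<in>{h. length h = n \<and> Q h}. hist_prob P s pol h)"

lemma ff_nonneg: "0 \<le> ff P n s pol Q"
  unfolding ff_def by (auto intro!: sum_nonneg hp_nonneg)

lemma ff_Suc:
  fixes P :: "'s::finite \<Rightarrow> 'a::finite \<Rightarrow> 's pmf"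
  shows "ff P (Suc n) s pol Q = (\<Sum>a\<in>UNIV. pmf (pol []) a *
     (\<Sum>s'\<in>UNIV. pmf (P s a) s' * ff P n s' (\<lambda>h. pol ((a,s')#h)) (\<lambda>h. Q ((a,s')#h))))"
proof -
  have "ff P (Suc n) s pol Q = (\<Sum>x\<in>UNIV. \<Sum>h\<in>{h. length h = n \<and> Q (x#h)}.
       hist_prob P s pol (x#h))"
    unfolding ff_def by (rule sum_len_Suc)
  also have "\<dots> = (\<Sum>(a,s')\<in>UNIV. pmf (pol []) a * (pmf (P s a) s' *
       ff P n s' (\<lambda>h. pol ((a,s')#h)) (\<lambda>h. Q ((a,s')#h))))"
    by (rule sum.cong) (auto simp: hp_cons ff_def sum_distrib_left mult.assoc)
  also have "\<dots> = (\<Sum>a\<in>UNIV. \<Sum>s'\<in>UNIV. pmf (pol []) a * (pmf (P s a) s' *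
       ff P n s' (\<lambda>h. pol ((a,s')#h)) (\<lambda>h. Q ((a,s')#h))))"
    by (subst UNIV_Times_UNIV[symmetric], subst sum.cartesian_product) simp
  finally show ?thesis by (simp add: sum_distrib_left)
qed

lemma sum_pmf_UNIV: "(\<Sum>a\<in>(UNIV::'a::finite set). pmf p a) = 1"
  by (rule sum_pmf_eq_1) auto

lemma ff_total:
  fixes P :: "'s::finite \<Rightarrow> 'a::finite \<Rightarrow> 's pmf"
  shows "ff P n s pol (\<lambda>_. True) = 1"
proof (induction n arbitrary: s pol)
  case 0
  then show ?case by (simp add: ff_def hist_prob_def)
next
  case (Suc n)
  show ?case by (simp add: ff_Suc Suc sum_pmf_UNIV)
qed

lemma ff_opt:
  fixes P :: "'s::finite \<Rightarrow> 'a::finite \<Rightarrow> 's pmf"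
  shows "\<exists>pol. \<forall>pol'. ff P n s pol Q \<le> ff P n s pol' Q"
proof (induction n arbitrary: s Q)
  case 0
  show ?case by (rule exI[of _ undefined]) (simp add: ff_def hist_prob_def)
next
  case (Suc n)
  have "\<forall>x. \<exists>pol. \<forall>pol'. ff P n (snd x) pol (\<lambda>h. Q (x#h)) \<le> ff P n (snd x) pol' (\<lambda>h. Q (x#h))"
    using Suc by blast
  then obtain Opt' where Opt': "\<forall>x pol'. ff P n (snd x) (Opt' x) (\<lambda>h. Q (x#h)) \<le> ff P n (snd x) pol' (\<lambda>h. Q (x#h))"
    by (rule choice[THEN exE]) blast
  define Opt where "Opt a s' = Opt' (a,s')" for a s'
  have Opt: "ff P n s' (Opt a s') (\<lambda>h. Q ((a,s')#h)) \<le> ff P n s' pol' (\<lambda>h. Q ((a,s')#h))" for a s' pol'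
    using spec[OF spec[OF Opt', of "(a,s')"], of pol'] unfolding Opt_def by simp
  define g where "g a = (\<Sum>s'\<in>UNIV. pmf (P s a) s' * ff P n s' (Opt a s') (\<lambda>h. Q ((a,s')#h)))" for a
  have "Min (range g) \<in> range g" by (rule Min_in) auto
  then obtain a0 where a0: "g a0 = Min (range g)" by (metis imageE)
  have a0min: "g a0 \<le> g a" for a unfolding a0 by simp
  define pst :: "('s,'a) policy" where
    "pst h = (case h of [] \<Rightarrow> return_pmf a0 | x#h' \<Rightarrow> Opt (fst x) (snd x) h')" for h
  have v: "ff P (Suc n) s pst Q = g a0"
    by (simp add: ff_Suc pst_def g_def pmf_return)
  show ?case
  proof (intro exI allI)
    fix pol' :: "('s,'a) policy"
    have "g a0 = (\<Sum>a\<in>UNIV. pmf (pol' []) a * g a0)"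
      using sum_pmf_UNIV[of "pol' []"] by (simp add: sum_distrib_right[symmetric])
    also have "\<dots> \<le> (\<Sum>a\<in>UNIV. pmf (pol' []) a * g a)"
      by (intro sum_mono mult_left_mono a0min) auto
    also have "\<dots> \<le> ff P (Suc n) s pol' Q"
      unfolding ff_Suc g_def
      by (intro sum_mono mult_left_mono Opt) auto
    finally show "ff P (Suc n) s pst Q \<le> ff P (Suc n) s pol' Q" using v by simp
  qed
qed



lemma ex_min_finite:
  assumes "finite A" "A \<noteq> {}"
    and tr: "\<And>x y z. x \<in> A \<Longrightarrow> y \<in> A \<Longrightarrow> z \<in> A \<Longrightarrow> le x y \<Longrightarrow> le y z \<Longrightarrow> le x z"
    and to: "\<And>x y. x \<in> A \<Longrightarrow> y \<in> A \<Longrightarrow> le x y \<or> le y x"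
  shows "\<exists>m\<in>A. \<forall>x\<in>A. le m x"
  using assms
proof (induction A rule: finite_ne_induct)
  case (singleton x)
  then show ?case by auto
next
  case (insert x F)
  have "\<exists>m\<in>F. \<forall>y\<in>F. le m y"
    by (rule insert.IH) (meson insert.prems insertCI)+
  then obtain m where m: "m \<in> F" "\<forall>y\<in>F. le m y" by blast
  show ?case
  proof (cases "le m x")
    case True then show ?thesis using m by blast
  next
    case False
    then have "le x m" using insert.prems(2) m by blast
    have xx: "le x x" using insert.prems(2)[of x x] by auto
    show ?thesis
    proof (rule bexI[of _ x])
      show "\<forall>a\<in>insert x F. le x a"
        using m insert.prems(1)[of x m] xx \<open>le x m\<close> by blast
    qed simp
  qed
qed

lemma ex_min_sub:
  assumes "A \<subseteq> W" "finite W" "A \<noteq> {}"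
    and tr: "\<forall>x\<in>W. \<forall>y\<in>W. \<forall>z\<in>W. le x y \<longrightarrow> le y z \<longrightarrow> le x z"
    and to: "\<forall>x\<in>W. \<forall>y\<in>W. le x y \<or> le y x"
  shows "\<exists>m\<in>A. \<forall>x\<in>A. le m x"
proof (rule ex_min_finite)
  show "finite A" using assms(1,2) by (rule finite_subset)
  show "A \<noteq> {}" by fact
  show "le x z" if "x \<in> A" "y \<in> A" "z \<in> A" "le x y" "le y z" for x y z
    using tr that assms(1) by blast
  show "le x y \<or> le y x" if "x \<in> A" "y \<in> A" for x y
    using to that assms(1) by blast
qed

lemma ex_max_sub:
  assumes "A \<subseteq> W" "finite W" "A \<noteq> {}"
    and tr: "\<forall>x\<in>W. \<forall>y\<in>W. \<forall>z\<in>W. le x y \<longrightarrow> le y z \<longrightarrow> le x z"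
    and to: "\<forall>x\<in>W. \<forall>y\<in>W. le x y \<or> le y x"
  shows "\<exists>m\<in>A. \<forall>x\<in>A. le x m"
  using ex_min_sub[of A W "\<lambda>x y. le y x"] assms by blast

theorem lemma1:
  fixes P :: "'s::finite \<Rightarrow> 'a::finite \<Rightarrow> 's pmf"
    and r :: "'s \<Rightarrow> 'a \<Rightarrow> 'r"
    and op :: "'w \<Rightarrow> 'r \<Rightarrow> 'w"
    and w0 :: 'w and s0 :: 's and T :: nat
    and le :: "'w \<Rightarrow> 'w \<Rightarrow> bool"
    and tau :: real
  assumes refl: "\<And>x. x \<in> wealth_levels op w0 r s0 T \<Longrightarrow> le x x"
    and antisym: "\<And>x y. x \<in> wealth_levels op w0 r s0 T \<Longrightarrow> y \<in> wealth_levels op w0 r s0 T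
                    \<Longrightarrow> le x y \<Longrightarrow> le y x \<Longrightarrow> x = y"
    and trans: "\<And>x y z. x \<in> wealth_levels op w0 r s0 T \<Longrightarrow> y \<in> wealth_levels op w0 r s0 T
                    \<Longrightarrow> z \<in> wealth_levels op w0 r s0 T \<Longrightarrow> le x y \<Longrightarrow> le y z \<Longrightarrow> le x z"
    and total: "\<And>x y. x \<in> wealth_levels op w0 r s0 T \<Longrightarrow> y \<in> wealth_levels op w0 r s0 T
                    \<Longrightarrow> le x y \<or> le y x"
    and tau: "0 < tau" "tau \<le> 1"
  shows "(\<forall>w. \<exists>pol. wealth_cdf le P op w0 r s0 T pol w
                    = (INF pol'. wealth_cdf le P op w0 r s0 T pol' w))
       \<and> (\<exists>qstar.
            is_min_wrt le {w \<in> wealth_levels op w0 r s0 T.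
                tau \<le> (INF pol. wealth_cdf le P op w0 r s0 T pol w)} qstar
          \<and> is_max_wrt le (range (lower_quantile le P op w0 r s0 T tau)) qstar)"
proof -
  let ?W = "wealth_levels op w0 r s0 T"
  let ?wl = "wealth op w0 r s0"
  define F where "F pol w = wealth_cdf le P op w0 r s0 T pol w" for pol w
  define Fs where "Fs w = (INF pol. F pol w)" for w
  have finW: "finite ?W" unfolding wealth_levels_def using fin_len[where 'x="'a \<times> 's", of T "\<lambda>_. True"] by (simp add: finite_imageI)
  have trW: "\<forall>x\<in>?W. \<forall>y\<in>?W. \<forall>z\<in>?W. le x y \<longrightarrow> le y z \<longrightarrow> le x z"
    using assms(3) by blast
  have toW: "\<forall>x\<in>?W. \<forall>y\<in>?W. le x y \<or> le y x" using assms(4) by blast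
  have wW: "length h = T \<Longrightarrow> ?wl h \<in> ?W" for h unfolding wealth_levels_def by auto
  have neW: "?W \<noteq> {}" using wW[of "replicate T undefined"] by auto
  have Fff: "F pol w = ff P T s0 pol (\<lambda>h. le (?wl h) w)" for pol w
  proof -
    have "F pol w = (\<Sum>w'\<in>{w'\<in>?W. le w' w}. \<Sum>h\<in>{h\<in>{h. length h = T \<and> le (?wl h) w}. ?wl h = w'}. hist_prob P s0 pol h)"
      unfolding F_def wealth_cdf_def wealth_pmf_def by (intro sum.cong refl) auto
    also have "\<dots> = ff P T s0 pol (\<lambda>h. le (?wl h) w)"
      unfolding ff_def
    proof (rule sum.group)
      show "finite {h. length h = T \<and> le (?wl h) w}" by (rule fin_len)
      show "finite {w' \<in> ?W. le w' w}" by (rule finite_subset[OF _ finW]) auto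
      show "?wl ` {h. length h = T \<and> le (?wl h) w} \<subseteq> {w' \<in> ?W. le w' w}" using wW by auto
    qed
    finally show ?thesis .
  qed
  have mono: "F pol x \<le> F pol y" if "x \<in> ?W" "y \<in> ?W" "le x y" for pol x y
    unfolding Fff ff_def
  proof (rule sum_mono2[OF fin_len])
    show "{h. length h = T \<and> le (?wl h) x} \<subseteq> {h. length h = T \<and> le (?wl h) y}"
    proof
      fix h assume "h \<in> {h. length h = T \<and> le (?wl h) x}"
      then have "length h = T" "le (?wl h) x" by auto
      then show "h \<in> {h. length h = T \<and> le (?wl h) y}"
        using trans[OF wW[OF \<open>length h = T\<close>] that(1,2)] that(3) by blast
    qed
  qed (rule hp_nonneg)
  have att: "\<exists>pol. \<forall>pol'. F pol w \<le> F pol' w" for w unfolding Fff by (rule ff_opt)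
  have Fs_eq: "Fs w = F pol w" if "\<forall>pol'. F pol w \<le> F pol' w" for pol w
    unfolding Fs_def
  proof (rule order.antisym)
    show "(INF pol. F pol w) \<le> F pol w" by (rule cINF_lower) (use that in \<open>auto intro: bdd_belowI[of _ "F pol w"]\<close>)
    show "F pol w \<le> (INF pol. F pol w)" by (rule cINF_greatest) (use that in auto)
  qed
  have Fs_le: "Fs w \<le> F pol w" for w pol
  proof -
    obtain p0 where p0: "\<forall>pol'. F p0 w \<le> F pol' w" using att by blast
    show ?thesis using Fs_eq[OF p0] p0 by simp
  qed
  have part1: "\<forall>w. \<exists>pol. F pol w = Fs w"
  proof
    fix w
    obtain p0 where p0: "\<forall>pol'. F p0 w \<le> F pol' w" using att by blast
    show "\<exists>pol. F pol w = Fs w" using Fs_eq[OF p0] by auto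
  qed
  obtain wm where wm: "wm \<in> ?W" "\<forall>x\<in>?W. le x wm"
  proof -
    have "\<exists>m\<in>?W. \<forall>x\<in>?W. le x m"
      using ex_max_sub[where le=le, OF _ finW neW trW toW] by blast
    then show ?thesis using that by blast
  qed
  have F1: "F pol wm = 1" for pol
  proof -
    have "ff P T s0 pol (\<lambda>h. le (?wl h) wm) = ff P T s0 pol (\<lambda>_. True)"
      unfolding ff_def by (rule sum.cong) (use wW wm in auto)
    then show ?thesis unfolding Fff ff_total .
  qed
  have Fs1: "Fs wm = 1"
  proof -
    obtain p0 where p0: "\<forall>pol'. F p0 wm \<le> F pol' wm" using att by blast
    show ?thesis using Fs_eq[OF p0] F1 by simp
  qed
  define S where "S = {w \<in> ?W. tau \<le> Fs w}"
  have "wm \<in> S" unfolding S_def using wm Fs1 tau by auto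
  have SW: "S \<subseteq> ?W" unfolding S_def by auto
  have "\<exists>m\<in>S. \<forall>x\<in>S. le m x"
    using ex_min_sub[where le=le, OF SW finW _ trW toW] \<open>wm \<in> S\<close> by blast
  then obtain qs where qs: "qs \<in> S" "\<forall>x\<in>S. le qs x" by blast
  have qsmin: "is_min_wrt le S qs" unfolding is_min_wrt_def using qs by auto
  have qsW: "qs \<in> ?W" using qs unfolding S_def by auto
  have lq: "is_min_wrt le {w\<in>?W. tau \<le> F pol w} (lower_quantile le P op w0 r s0 T tau pol)" for pol
  proof -
    have "wm \<in> {w\<in>?W. tau \<le> F pol w}" using wm F1 tau by auto
    then have "\<exists>m\<in>{w\<in>?W. tau \<le> F pol w}. \<forall>x\<in>{w\<in>?W. tau \<le> F pol w}. le m x"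
      using ex_min_sub[where le=le, OF _ finW _ trW toW, of "{w\<in>?W. tau \<le> F pol w}"] by blast
    then obtain m where m: "m \<in> {w\<in>?W. tau \<le> F pol w}" "\<forall>x\<in>{w\<in>?W. tau \<le> F pol w}. le m x"
      by blast
    have mm: "is_min_wrt le {w\<in>?W. tau \<le> F pol w} m" unfolding is_min_wrt_def using m by auto
    have "lower_quantile le P op w0 r s0 T tau pol = m"
      unfolding lower_quantile_def F_def[symmetric]
    proof (rule the_equality)
      show "is_min_wrt le {w\<in>?W. tau \<le> F pol w} m" by (rule mm)
      fix q assume "is_min_wrt le {w\<in>?W. tau \<le> F pol w} q"
      then show "q = m" using mm antisym unfolding is_min_wrt_def by blast
    qed
    then show ?thesis using mm by simp
  qed
  have upper: "le (lower_quantile le P op w0 r s0 T tau pol) qs" for pol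
  proof -
    have "qs \<in> {w\<in>?W. tau \<le> F pol w}" using qs Fs_le[of qs pol] unfolding S_def by auto
    then show ?thesis using lq[of pol] unfolding is_min_wrt_def by blast
  qed
  have reach: "\<exists>pol. lower_quantile le P op w0 r s0 T tau pol = qs"
  proof (cases "{w\<in>?W. \<not> le qs w} = {}")
    case True
    have uW: "lower_quantile le P op w0 r s0 T tau undefined \<in> ?W" using lq unfolding is_min_wrt_def by blast
    then have "le qs (lower_quantile le P op w0 r s0 T tau undefined)" using True by blast
    then show ?thesis using upper antisym qsW uW by blast
  next
    case False
    have "\<exists>l\<in>{w\<in>?W. \<not> le qs w}. \<forall>x\<in>{w\<in>?W. \<not> le qs w}. le x l"
      using ex_max_sub[where le=le, OF _ finW False trW toW] by blast
    then obtain l where l: "l \<in> {w\<in>?W. \<not> le qs w}" "\<forall>x\<in>{w\<in>?W. \<not> le qs w}. le x l"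
      by blast
    have "l \<notin> S" using l qs by blast
    then have "Fs l < tau" using l unfolding S_def by auto
    obtain pol where pol: "\<forall>pol'. F pol l \<le> F pol' l" using att by blast
    have Fl: "F pol l < tau" using Fs_eq[OF pol] \<open>Fs l < tau\<close> by simp
    let ?m = "lower_quantile le P op w0 r s0 T tau pol"
    have mW: "?m \<in> ?W" "tau \<le> F pol ?m" using lq[of pol] unfolding is_min_wrt_def by auto
    have "le qs ?m"
    proof (rule ccontr)
      assume "\<not> le qs ?m"
      then have "le ?m l" using l mW by blast
      then have "F pol ?m \<le> F pol l" using mono mW l by blast
      then show False using Fl mW by simp
    qed
    then show ?thesis using upper[of pol] antisym qsW mW by blast
  qed
  show ?thesis
  proof
    show "\<forall>w. \<exists>pol. wealth_cdf le P op w0 r s0 T pol w = (INF pol'. wealth_cdf le P op w0 r s0 T pol' w)"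
      using part1 unfolding F_def Fs_def by simp
    have "is_max_wrt le (range (lower_quantile le P op w0 r s0 T tau)) qs"
      unfolding is_max_wrt_def using reach upper by auto
    moreover have "is_min_wrt le {w \<in> ?W. tau \<le> (INF pol. wealth_cdf le P op w0 r s0 T pol w)} qs"
      using qsmin unfolding S_def Fs_def F_def by simp
    ultimately show "\<exists>qstar. is_min_wrt le {w \<in> ?W. tau \<le> (INF pol. wealth_cdf le P op w0 r s0 T pol w)} qstar
          \<and> is_max_wrt le (range (lower_quantile le P op w0 r s0 T tau)) qstar" by blast
  qed
qed

end
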